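(* Let $F$ be Thompson's group with standard generators $x_0,x_1$. Let $g\in F$ and let $H=\langle x_0,(x_0x_1)^g\rangle$, where $(x_0x_1)^g=g^{-1}x_0x_1g$. Then $\mathrm{Cl}(H)=F$.
   Context: Thompson's group $F$ is the group of all piecewise linear homeomorphisms of $[0,1]$ with finitely many breakpoints, all at finite dyadic fractions, and all slopes integer powers of $2$. Composition is from left to right ($fg$ means first $f$, then $g$), and $a^g=g^{-1}ag$. Writing points of $(0,1)$ as binary expansions $.s$, $x_0$ maps $.00\alpha\mapsto .0\alpha$, $.01\alpha\mapsto .10\alpha$, $.1\alpha\mapsto .11\alpha$, and $x_1$ maps $.0\alpha\mapsto .0\alpha$, $.100\alpha\mapsto .10\alpha$, $.101\alpha\mapsto .110\alpha$, $.11\alpha\mapsto .111\alpha$, for every infinite binary word $\alpha$. For a subgroup $H\le F$, the closure $\mathrm{Cl}(H)$ is the subgroup of $F$ consisting of all piecewise-$H$ functions, i.e. all $f\in F$ for which there is a finite subdivision of $[0,1]$ into subintervals such that on each subinterval $f$ coincides with some element of $H$ (equivalently, the topological full group of $H$ acting on the finite dyadic fractions of $[0,1]$). *)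

theory Defs
  imports Complex_Main
begin

definition dyadic :: "real \<Rightarrow> bool" where
  "dyadic x \<longleftrightarrow> (\<exists>(m::int) (n::nat). x = real_of_int m / 2 ^ n)"

text \<open>Elements of Thompson's group F, realised as functions real to real that are
  the identity outside [0,1] (so that they are bijections of the real line and
  composition / inversion are the usual ones).\<close>
definition ThompsonF :: "(real \<Rightarrow> real) set" where
  "ThompsonF = {f.
     (\<forall>x. x \<notin> {0..1} \<longrightarrow> f x = x) \<and>
     continuous_on {0..1} f \<and> strict_mono_on {0..1} f \<and> f 0 = 0 \<and> f 1 = 1 \<and>
     (\<exists>P. finite P \<and> P \<subseteq> {0..1} \<and> 0 \<in> P \<and> 1 \<in> P \<and> (\<forall>p\<in>P. dyadic p) \<and>
        (\<forall>a\<in>P. \<forall>b\<in>P. a < b \<and> {a<..<b} \<inter> P = {} \<longrightarrow>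
            (\<exists>(k::int) (c::real). \<forall>x\<in>{a..b}. f x = 2 powr (real_of_int k) * x + c)))}"

text \<open>Product with left-to-right composition: fg means first f, then g.\<close>
definition fmul :: "(real \<Rightarrow> real) \<Rightarrow> (real \<Rightarrow> real) \<Rightarrow> (real \<Rightarrow> real)" where
  "fmul f g = g \<circ> f"

definition fconj :: "(real \<Rightarrow> real) \<Rightarrow> (real \<Rightarrow> real) \<Rightarrow> (real \<Rightarrow> real)" where
  "fconj a g = fmul (fmul (inv g) a) g"

text \<open>Generators x0 and x1 (explicit affine pieces read off from the binary description).\<close>
definition x0 :: "real \<Rightarrow> real" where
  "x0 x = (if x < 0 \<or> x > 1 then x
           else if x \<le> 1/4 then 2 * x
           else if x \<le> 1/2 then x + 1/4
           else x / 2 + 1/2)"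

definition x1 :: "real \<Rightarrow> real" where
  "x1 x = (if x < 0 \<or> x > 1 then x
           else if x \<le> 1/2 then x
           else if x \<le> 5/8 then 2 * x - 1/2
           else if x \<le> 3/4 then x + 1/8
           else x / 2 + 1/2)"

inductive_set gen_subgroup :: "(real \<Rightarrow> real) set \<Rightarrow> (real \<Rightarrow> real) set"
  for S :: "(real \<Rightarrow> real) set" where
  gen_id: "id \<in> gen_subgroup S"
| gen_base: "s \<in> S \<Longrightarrow> s \<in> gen_subgroup S"
| gen_inv: "s \<in> S \<Longrightarrow> inv s \<in> gen_subgroup S"
| gen_mul: "a \<in> gen_subgroup S \<Longrightarrow> b \<in> gen_subgroup S \<Longrightarrow> fmul a b \<in> gen_subgroup S"

definition closureF :: "(real \<Rightarrow> real) set \<Rightarrow> (real \<Rightarrow> real) set" where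
  "closureF H = {f \<in> ThompsonF.
     \<exists>P. finite P \<and> P \<subseteq> {0..1} \<and> 0 \<in> P \<and> 1 \<in> P \<and>
        (\<forall>a\<in>P. \<forall>b\<in>P. a < b \<and> {a<..<b} \<inter> P = {} \<longrightarrow>
            (\<exists>h\<in>H. \<forall>x\<in>{a..b}. f x = h x))}"

end

theory Submission
  imports Defs
begin

definition x0i :: "real \<Rightarrow> real" where
  "x0i x = (if x < 0 \<or> x > 1 then x
           else if x \<le> 1/2 then x / 2
           else if x \<le> 3/4 then x - 1/4
           else 2 * x - 1)"

definition x1i :: "real \<Rightarrow> real" where
  "x1i x = (if x < 0 \<or> x > 1 then x
           else if x \<le> 1/2 then x
           else if x \<le> 3/4 then x / 2 + 1/4
           else if x \<le> 7/8 then x - 1/8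
           else 2 * x - 1)"

lemma x0i_x0: "x0i (x0 x) = x"
  unfolding x0_def x0i_def by (auto simp: field_simps)

lemma x0_x0i: "x0 (x0i x) = x"
  unfolding x0_def x0i_def by (auto simp: field_simps)

lemma x1i_x1: "x1i (x1 x) = x"
  unfolding x1_def x1i_def by (auto simp: field_simps)

lemma x1_x1i: "x1 (x1i x) = x"
  unfolding x1_def x1i_def by (auto simp: field_simps)

lemma bij_x0: "bij x0"
  by (metis bijI' x0i_x0 x0_x0i)

lemma bij_x1: "bij x1"
  by (metis bijI' x1i_x1 x1_x1i)

lemma inv_x0: "inv x0 = x0i"
  by (rule inv_unique_comp) (auto simp: fun_eq_iff x0i_x0 x0_x0i)


lemma gen_bij: "h \<in> gen_subgroup S \<Longrightarrow> (\<forall>s\<in>S. bij s) \<Longrightarrow> bij h"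
  by (induction rule: gen_subgroup.induct) (auto simp: fmul_def intro: bij_comp bij_imp_bij_inv)

lemma gen_inv_closed: "h \<in> gen_subgroup S \<Longrightarrow> (\<forall>s\<in>S. bij s) \<Longrightarrow> inv h \<in> gen_subgroup S"
proof (induction rule: gen_subgroup.induct)
  case gen_id then show ?case by (metis inv_id gen_subgroup.gen_id)
next
  case (gen_base s) then show ?case by (simp add: gen_subgroup.gen_inv)
next
  case (gen_inv s) then show ?case by (simp add: inv_inv_eq gen_subgroup.gen_base)
next
  case (gen_mul a b)
  have "bij a" "bij b" using gen_mul gen_bij by auto
  then have "inv (fmul a b) = fmul (inv b) (inv a)" by (simp add: fmul_def o_inv_distrib)
  then show ?case using gen_mul by (simp add: gen_subgroup.gen_mul)
qed

lemma gen_comp: "a \<in> gen_subgroup S \<Longrightarrow> b \<in> gen_subgroup S \<Longrightarrow> b \<circ> a \<in> gen_subgroup S"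
  using gen_subgroup.gen_mul[of a S b] by (simp add: fmul_def)

lemma gen_pow: "a \<in> gen_subgroup S \<Longrightarrow> a ^^ n \<in> gen_subgroup S"
proof (induction n)
  case 0 then show ?case by (metis funpow_0 gen_subgroup.gen_id id_apply ext)
next
  case (Suc n) then show ?case using gen_comp[of "a^^n" S a] by (simp only: funpow.simps(2))
qed

definition dI :: "int \<Rightarrow> nat \<Rightarrow> real set" where
  "dI j n = {real_of_int j / 2^n .. (real_of_int j + 1) / 2^n}"

lemma dI_iff: "x \<in> dI j n \<longleftrightarrow> of_int j \<le> x * 2^n \<and> x * 2^n \<le> of_int j + 1"
  by (simp add: dI_def divide_le_eq le_divide_eq)

definition Rel :: "(real \<Rightarrow> real) set \<Rightarrow> int \<Rightarrow> nat \<Rightarrow> int \<Rightarrow> nat \<Rightarrow> bool" where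
  "Rel H j n j' n' \<longleftrightarrow> (\<exists>h\<in>H. \<forall>x\<in>dI j n. h x = (of_int j' + (x * 2^n - of_int j)) / 2^n')"

lemma Rel_refl:
  assumes "id \<in> H" shows "Rel H j n j n"
  unfolding Rel_def using assms by (intro bexI[of _ id]) (auto simp: field_simps)

lemma Rel_sym:
  assumes R: "Rel H j n j' n'" and hinv: "\<And>h. h \<in> H \<Longrightarrow> inv h \<in> H \<and> bij h"
  shows "Rel H j' n' j n"
proof -
  obtain h where h: "h \<in> H" "\<And>x. x\<in>dI j n \<Longrightarrow> h x = (of_int j' + (x * 2^n - of_int j)) / 2^n'"
    using R unfolding Rel_def by auto
  have bh: "bij h" using hinv h(1) by auto
  show ?thesis unfolding Rel_def
  proof (intro bexI[of _ "inv h"] ballI)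
    fix y assume y: "y \<in> dI j' n'"
    define x where "x = (of_int j + (y * 2^n' - of_int j')) / (2::real)^n"
    have x2: "x * 2^n = of_int j + (y * 2^n' - of_int j')" unfolding x_def by simp
    have xI: "x \<in> dI j n" using y unfolding dI_iff x2 by auto
    have "h x = y" using h(2)[OF xI] unfolding x_def by (auto simp: field_simps)
    then show "inv h y = (of_int j + (y * 2^n' - of_int j')) / 2^n"
      using bh by (metis bij_inv_eq_iff x_def)
  qed (use hinv h in auto)
qed

lemma Rel_trans:
  assumes R1: "Rel H j n j' n'" and R2: "Rel H j' n' j'' n''"
    and comp: "\<And>a b. a \<in> H \<Longrightarrow> b \<in> H \<Longrightarrow> b \<circ> a \<in> H"
  shows "Rel H j n j'' n''"
proof -
  obtain h where h: "h \<in> H" "\<And>x. x\<in>dI j n \<Longrightarrow> h x = (of_int j' + (x * 2^n - of_int j)) / 2^n'"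
    using R1 unfolding Rel_def by auto
  obtain h' where h': "h' \<in> H" "\<And>x. x\<in>dI j' n' \<Longrightarrow> h' x = (of_int j'' + (x * 2^n' - of_int j')) / 2^n''"
    using R2 unfolding Rel_def by auto
  show ?thesis unfolding Rel_def
  proof (intro bexI[of _ "h' \<circ> h"] ballI)
    fix x assume x: "x \<in> dI j n"
    have hx: "h x * 2^n' = of_int j' + (x * 2^n - of_int j)" using h(2)[OF x] by simp
    have "h x \<in> dI j' n'" using x unfolding dI_iff hx by auto
    then have "h' (h x) * 2^n'' = of_int j'' + (h x * 2^n' - of_int j')" using h'(2) by simp
    then have "h' (h x) * 2^n'' = of_int j'' + (x * 2^n - of_int j)" using hx by simp
    then show "(h' \<circ> h) x = (of_int j'' + (x * 2^n - of_int j)) / 2^n''"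
      by (simp add: field_simps)
  qed (use comp h h' in auto)
qed

lemma Rel_restrict:
  assumes R: "Rel H j n j' n'" and r: "0 \<le> r" "r < 2^d"
  shows "Rel H (j * 2^d + r) (n + d) (j' * 2^d + r) (n' + d)"
proof -
  obtain h where h: "h \<in> H" "\<And>x. x\<in>dI j n \<Longrightarrow> h x = (of_int j' + (x * 2^n - of_int j)) / 2^n'"
    using R unfolding Rel_def by auto
  have r': "real_of_int r + 1 \<le> 2^d" using r
    by (metis (mono_tags, opaque_lifting) of_int_add of_int_le_iff of_int_numeral of_int_of_nat_eq of_int_power of_nat_numeral zless_imp_add1_zle of_int_1)
  show ?thesis unfolding Rel_def
  proof (intro bexI[of _ h] ballI)
    fix x assume x: "x \<in> dI (j * 2 ^ d + r) (n + d)"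
    define X where "X = x * 2^n"
    define D where "D = (2::real)^d"
    have D0: "D > 0" unfolding D_def by simp
    have xx: "x * 2^(n+d) = X * D" unfolding X_def D_def by (simp add: power_add)
    have a1: "of_int j * D + of_int r \<le> X * D" "X * D \<le> of_int j * D + of_int r + 1"
      using x unfolding dI_iff xx by (auto simp: D_def)
    have rD: "of_int r + 1 \<le> D" using r' unfolding D_def by simp
    have "of_int j * D \<le> X * D" using a1(1) r by linarith
    then have b1: "of_int j \<le> X" using D0 by simp
    have "X * D \<le> (of_int j + 1) * D" using a1(2) rD by (simp add: algebra_simps)
    then have b2: "X \<le> of_int j + 1" using D0 by simp
    have "x \<in> dI j n" unfolding dI_iff using b1 b2 X_def by auto
    then have "h x * 2^n' = of_int j' + (x * 2 ^ n - of_int j)" using h(2) by simp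
    then have "h x * 2^n' * 2^d = (of_int j' + (x * 2 ^ n - of_int j)) * 2^d" by simp
    then show "h x = (of_int (j' * 2 ^ d + r) + (x * 2 ^ (n + d) - of_int (j * 2 ^ d + r))) / 2 ^ (n' + d)"
      by (simp add: field_simps power_add)
  qed (use h in auto)
qed


lemma dI_le:
  assumes "x \<in> dI j n" "(j + 1) * 2^m \<le> c * 2^n"
  shows "x \<le> of_int c / 2^m"
proof -
  have "x \<le> (of_int j + 1) / 2^n" using assms(1) unfolding dI_def by auto
  also have "\<dots> \<le> of_int c / 2^m"
  proof -
    have "real_of_int ((j + 1) * 2^m) \<le> real_of_int (c * 2^n)" using assms(2) by (simp only: of_int_le_iff)
    then have "(of_int j + 1) * 2^m \<le> of_int c * (2::real)^n" by simp
    then show ?thesis by (simp add: divide_le_eq le_divide_eq mult.commute)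
  qed
  finally show ?thesis .
qed

lemma dI_ge:
  assumes "x \<in> dI j n" "c * 2^n \<le> j * 2^m"
  shows "of_int c / 2^m \<le> x"
proof -
  have "of_int c / 2^m \<le> of_int j / (2::real)^n"
  proof -
    have "real_of_int (c * 2^n) \<le> real_of_int (j * 2^m)" using assms(2) by (simp only: of_int_le_iff)
    then have "of_int c * 2^n \<le> of_int j * (2::real)^m" by simp
    then show ?thesis by (simp add: divide_le_eq le_divide_eq mult.commute)
  qed
  also have "\<dots> \<le> x" using assms(1) unfolding dI_def by auto
  finally show ?thesis .
qed

locale relH =
  fixes H :: "(real \<Rightarrow> real) set"
  assumes Hid: "id \<in> H"
    and Hcomp: "\<And>a b. a \<in> H \<Longrightarrow> b \<in> H \<Longrightarrow> b \<circ> a \<in> H"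
    and Hinv: "\<And>h. h \<in> H \<Longrightarrow> inv h \<in> H \<and> bij h"
    and Hx0: "x0 \<in> H"
    and K1: "Rel H 2 3 1 2"
    and K2: "Rel H 3 3 1 2"
begin

lemma refl: "Rel H j n j n" by (rule Rel_refl[OF Hid])
lemma sym: "Rel H j n j' n' \<Longrightarrow> Rel H j' n' j n" using Rel_sym Hinv by blast
lemma trans: "Rel H j n j' n' \<Longrightarrow> Rel H j' n' j'' n'' \<Longrightarrow> Rel H j n j'' n''"
  using Rel_trans Hcomp by blast

lemma x0_Rel:
  assumes "\<And>x. x \<in> dI j n \<Longrightarrow> x0 x = (of_int j' + (x * 2^n - of_int j)) / 2^n'"
  shows "Rel H j n j' n'"
  unfolding Rel_def using assms Hx0 by blast

lemma M1:
  assumes "4 * (j + 1) \<le> 2^(Suc m)" "0 \<le> j"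
  shows "Rel H j (Suc m) j m"
proof (rule x0_Rel)
  fix x assume x: "x \<in> dI j (Suc m)"
  define P where "P = (2::real)^Suc m"
  have P0: "P > 0" unfolding P_def by simp
  have a: "of_int j \<le> x * P" "x * P \<le> of_int j + 1" using x unfolding dI_iff P_def by auto
  have "real_of_int (4 * (j + 1)) \<le> real_of_int (2^Suc m)" using assms(1) by (simp only: of_int_le_iff)
  then have b1: "4 * of_int j + 4 \<le> P" unfolding P_def by simp
  have b2: "0 \<le> (of_int j::real)" using assms by simp
  define Y where "Y = x * P"
  have "4 * Y \<le> P" using a b1 b2 unfolding Y_def[symmetric] by linarith
  then have "(4 * x) * P \<le> 1 * P" unfolding Y_def by (simp add: algebra_simps)
  then have "4 * x \<le> 1" using P0 by (simp only: mult_le_cancel_right)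
  moreover have "0 \<le> Y" using a b1 b2 unfolding Y_def[symmetric] by linarith
  then have "0 \<le> x * P" unfolding Y_def .
  then have "0 \<le> x" using P0 by (simp add: zero_le_mult_iff)
  ultimately have "x0 x = 2 * x" unfolding x0_def by auto
  then show "x0 x = (of_int j + (x * 2 ^ Suc m - of_int j)) / 2 ^ m" by simp
qed

lemma M2:
  assumes "2^(Suc (Suc m)) \<le> 4 * j" "2 * (j + 1) \<le> 2^(Suc (Suc m))"
  shows "Rel H j (Suc (Suc m)) (j + 2^m) (Suc (Suc m))"
proof (rule x0_Rel)
  fix x assume x: "x \<in> dI j (Suc (Suc m))"
  have "of_int 1 / 2^2 \<le> x" by (rule dI_ge[OF x]) (use assms in simp)
  moreover have "x \<le> of_int 1 / 2^1" by (rule dI_le[OF x]) (use assms in simp)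
  ultimately have "x0 x = x + 1/4" unfolding x0_def by auto
  moreover have "(of_int (j + 2^m) + (x * 2 ^ Suc (Suc m) - of_int j)) / 2 ^ Suc (Suc m) = x + 1/4"
    by (simp add: divide_simps) (simp add: algebra_simps)
  ultimately show "x0 x = (of_int (j + 2^m) + (x * 2 ^ Suc (Suc m) - of_int j)) / 2 ^ Suc (Suc m)"
    by simp
qed

lemma M3:
  assumes "2^n \<le> 2 * j" "j + 1 \<le> 2^n"
  shows "Rel H j n (j + 2^n) (Suc n)"
proof (rule x0_Rel)
  fix x assume x: "x \<in> dI j n"
  have "of_int 1 / 2^1 \<le> x" by (rule dI_ge[OF x]) (use assms in simp)
  moreover have "x \<le> of_int 1 / 2^0" by (rule dI_le[OF x]) (use assms in simp)
  ultimately have "x0 x = x / 2 + 1/2" unfolding x0_def by auto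
  moreover have "(of_int (j + 2^n) + (x * 2 ^ n - of_int j)) / 2 ^ Suc n = x / 2 + 1/2"
    by (simp add: divide_simps) (simp add: algebra_simps)
  ultimately show "x0 x = (of_int (j + 2^n) + (x * 2 ^ n - of_int j)) / 2 ^ Suc n"
    by simp
qed

lemma caseB:
  assumes IH: "\<And>j. 0 < j \<Longrightarrow> j + 1 < 2^(Suc m) \<Longrightarrow> Rel H j (Suc m) 1 2"
    and j: "2^m \<le> j" "j < 2 * 2^m"
  shows "Rel H j (Suc (Suc m)) 1 2"
proof (cases m)
  case 0
  then have "j = 1" using j by simp
  then show ?thesis using 0 refl by (simp add: numeral_2_eq_2)
next
  case (Suc k)
  define E :: int where "E = 2^k"
  have E0: "E \<ge> 1" unfolding E_def by simp
  have jE: "2 * E \<le> j" "j < 4 * E" using j unfolding E_def Suc by simp_all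
  show ?thesis
  proof (cases "j < 3 * E")
    case True
    define r where "r = j - 2 * E"
    have r: "0 \<le> r" "r < 2^k" using jE True unfolding r_def E_def by simp_all
    have "Rel H (2 * 2^k + r) (3 + k) (1 * 2^k + r) (2 + k)" by (rule Rel_restrict[OF K1 r])
    moreover have "2 * 2^k + r = j" unfolding r_def E_def by simp
    moreover have "3 + k = Suc (Suc m)" "2 + k = Suc m" using Suc by simp_all
    ultimately have R1: "Rel H j (Suc (Suc m)) (2^k + r) (Suc m)" by simp
    have "Rel H (2^k + r) (Suc m) 1 2"
      by (rule IH) (use r E0 Suc in \<open>simp_all add: E_def\<close>)
    then show ?thesis using R1 trans by blast
  next
    case False
    define r where "r = j - 3 * E"
    have r: "0 \<le> r" "r < 2^k" using jE False unfolding r_def E_def by simp_all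
    have "Rel H (3 * 2^k + r) (3 + k) (1 * 2^k + r) (2 + k)" by (rule Rel_restrict[OF K2 r])
    moreover have "3 * 2^k + r = j" unfolding r_def E_def by simp
    moreover have "3 + k = Suc (Suc m)" "2 + k = Suc m" using Suc by simp_all
    ultimately have R1: "Rel H j (Suc (Suc m)) (2^k + r) (Suc m)" by simp
    have "Rel H (2^k + r) (Suc m) 1 2"
      by (rule IH) (use r E0 Suc in \<open>simp_all add: E_def\<close>)
    then show ?thesis using R1 trans by blast
  qed
qed

lemma interior_rel: "0 < j \<Longrightarrow> j + 1 < 2^n \<Longrightarrow> Rel H j n 1 2"
proof (induction n arbitrary: j rule: less_induct)
  case (less n)
  obtain m where n: "n = Suc (Suc m)"
  proof (cases n)
    case 0 then show ?thesis using less.prems by simp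
  next
    case (Suc n') then show ?thesis using less.prems that by (cases n') auto
  qed
  define Q :: int where "Q = 2^m"
  have Q1: "Q \<ge> 1" unfolding Q_def by simp
  have n4: "(2::int)^n = 4 * Q" "(2::int)^(Suc m) = 2 * Q" unfolding n Q_def by simp_all
  have IH: "\<And>j. 0 < j \<Longrightarrow> j + 1 < 2^(Suc m) \<Longrightarrow> Rel H j (Suc m) 1 2"
    using less.IH n by auto
  have B: "\<And>j. Q \<le> j \<Longrightarrow> j < 2 * Q \<Longrightarrow> Rel H j n 1 2"
    using caseB[OF IH] n unfolding Q_def by auto
  consider "j < Q" | "Q \<le> j" "j < 2 * Q" | "2 * Q \<le> j" "j < 3 * Q" | "3 * Q \<le> j" by linarith
  then show ?case
  proof cases
    case 1
    have "Rel H j (Suc (Suc m)) j (Suc m)" by (rule M1) (use 1 less.prems n4 n in auto)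
    moreover have "Rel H j (Suc m) 1 2" by (rule IH) (use 1 less.prems n4 in auto)
    ultimately show ?thesis using trans n by blast
  next
    case 2 then show ?thesis using B by blast
  next
    case 3
    have "Rel H (j - Q) (Suc (Suc m)) (j - Q + 2^m) (Suc (Suc m))" by (rule M2) (use 3 n4 n in auto)
    then have "Rel H (j - Q) n j n" using n Q_def by simp
    then have "Rel H j n (j - Q) n" by (rule sym)
    moreover have "Rel H (j - Q) n 1 2" by (rule B) (use 3 in auto)
    ultimately show ?thesis using trans by blast
  next
    case 4
    have "Rel H (j - 2 * Q) (Suc m) (j - 2 * Q + 2^(Suc m)) (Suc (Suc m))"
      by (rule M3) (use 4 n4 less.prems in auto)
    then have "Rel H (j - 2 * Q) (Suc m) j n" using n n4 by simp
    then have "Rel H j n (j - 2 * Q) (Suc m)" by (rule sym)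
    moreover have "Rel H (j - 2 * Q) (Suc m) 1 2" by (rule IH) (use 4 n4 less.prems Q1 in auto)
    ultimately show ?thesis using trans by blast
  qed
qed

lemma left_rel: "1 \<le> n \<Longrightarrow> Rel H 0 n 0 1"
proof (induction n)
  case 0 then show ?case by simp
next
  case (Suc n)
  show ?case
  proof (cases n)
    case 0 then show ?thesis using refl by simp
  next
    case (Suc k)
    have "Rel H 0 (Suc n) 0 n" by (rule M1) (use Suc in auto)
    then show ?thesis using Suc.IH Suc trans by auto
  qed
qed

lemma right_rel: "1 \<le> n \<Longrightarrow> Rel H (2^n - 1) n 1 1"
proof (induction n)
  case 0 then show ?case by simp
next
  case (Suc n)
  show ?case
  proof (cases n)
    case 0 then show ?thesis using refl by simp
  next
    case (Suc k)
    have "Rel H (2^n - 1) n (2^n - 1 + 2^n) (Suc n)" by (rule M3) (use Suc in auto)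
    then have "Rel H (2^Suc n - 1) (Suc n) (2^n - 1) n" using sym by simp
    then show ?thesis using Suc.IH Suc trans by auto
  qed
qed

lemma all_rel:
  assumes "0 \<le> j" "j + 1 \<le> 2^N" "0 \<le> j'" "j' + 1 \<le> 2^N'" "1 \<le> N"
    and "j = 0 \<longleftrightarrow> j' = 0" "j + 1 = 2^N \<longleftrightarrow> j' + 1 = 2^N'"
  shows "Rel H j N j' N'"
proof -
  have N': "1 \<le> N'"
  proof (rule ccontr)
    assume "\<not> 1 \<le> N'" then have "N' = 0" by simp
    then have "j' = 0" "j' + 1 = 2^N'" using assms by auto
    then have "j = 0" "j + 1 = 2^N" using assms by auto
    then have "(2::int)^N = 2^0" by simp
    then have "N = 0" by (simp only: power_inject_exp)
    then show False using assms by simp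
  qed
  consider "j = 0" | "j + 1 = 2^N" | "0 < j" "j + 1 < 2^N" using assms by linarith
  then show ?thesis
  proof cases
    case 1
    then have "j' = 0" using assms by auto
    have a: "Rel H 0 N 0 1" by (rule left_rel) (use assms in simp)
    have b: "Rel H 0 N' 0 1" by (rule left_rel) (use N' in simp)
    have "Rel H 0 N 0 N'" by (rule trans[OF a sym[OF b]])
    then show ?thesis using 1 \<open>j' = 0\<close> by simp
  next
    case 2
    then have j': "j' = 2^N' - 1" using assms by auto
    have j: "j = 2^N - 1" using 2 by simp
    have a: "Rel H (2^N - 1) N 1 1" by (rule right_rel) (use assms in simp)
    have b: "Rel H (2^N' - 1) N' 1 1" by (rule right_rel) (use N' in simp)
    have "Rel H (2^N - 1) N (2^N' - 1) N'" by (rule trans[OF a sym[OF b]])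
    then show ?thesis using j j' by simp
  next
    case 3
    then have "0 < j'" "j' + 1 < 2^N'" using assms by auto
    have a: "Rel H j N 1 2" by (rule interior_rel) (use 3 in auto)
    have b: "Rel H j' N' 1 2" by (rule interior_rel) (use \<open>0 < j'\<close> \<open>j' + 1 < 2^N'\<close> in auto)
    show ?thesis by (rule trans[OF a sym[OF b]])
  qed
qed

end

lemma TF_props:
  assumes "g \<in> ThompsonF"
  shows "\<And>x. x \<notin> {0..1} \<Longrightarrow> g x = x" "continuous_on {0..1} g" "strict_mono_on {0..1} g"
    "g 0 = 0" "g 1 = 1"
  using assms unfolding ThompsonF_def by auto

lemma TF_range:
  assumes "g \<in> ThompsonF" "x \<in> {0..1}" shows "g x \<in> {0..1}"
proof -
  have sm: "strict_mono_on {0..1} g" and g0: "g 0 = 0" and g1: "g 1 = 1" using TF_props[OF assms(1)] by auto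
  have "g 0 \<le> g x" using assms(2) strict_mono_onD[OF sm, of 0 x] by (cases "x = 0") auto
  moreover have "g x \<le> g 1" using assms(2) strict_mono_onD[OF sm, of x 1] by (cases "x = 1") auto
  ultimately show ?thesis using g0 g1 by auto
qed

lemma TF_bij:
  assumes "g \<in> ThompsonF" shows "bij g"
proof (rule bijI)
  have out: "\<And>x. x \<notin> {0..1} \<Longrightarrow> g x = x" and sm: "strict_mono_on {0..1} g"
    and cont: "continuous_on {0..1} g" and g0: "g 0 = 0" and g1: "g 1 = 1"
    using TF_props[OF assms] by auto
  show "inj g"
  proof (rule injI)
    fix x y assume e: "g x = g y"
    show "x = y"
    proof (cases "x \<in> {0..1}"; cases "y \<in> {0..1}")
      assume x: "x \<in> {0..1}" and y: "y \<in> {0..1}"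
      show "x = y"
      proof (rule ccontr)
        assume "x \<noteq> y"
        then consider "x < y" | "y < x" by linarith
        then show False
        proof cases
          assume "x < y" then have "g x < g y" using strict_mono_onD[OF sm] x y by blast
          then show False using e by simp
        next
          assume "y < x" then have "g y < g x" using strict_mono_onD[OF sm] x y by blast
          then show False using e by simp
        qed
      qed
    next
      assume x: "x \<in> {0..1}" and y: "y \<notin> {0..1}"
      then show "x = y" using TF_range[OF assms x] out[OF y] e by auto
    next
      assume x: "x \<notin> {0..1}" and y: "y \<in> {0..1}"
      then show "x = y" using TF_range[OF assms y] out[OF x] e by auto
    next
      assume x: "x \<notin> {0..1}" and y: "y \<notin> {0..1}"
      then show "x = y" using out e by auto
    qed
  qed
  show "surj g"
  proof (rule surjI)
    fix y
    show "g (if y \<in> {0..1} then (SOME x. x \<in> {0..1} \<and> g x = y) else y) = y"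
    proof (cases "y \<in> {0..1}")
      case True
      have "\<exists>x\<ge>0. x \<le> 1 \<and> g x = y"
        by (rule IVT') (use True g0 g1 cont in auto)
      then have "\<exists>x. x \<in> {0..1} \<and> g x = y" by auto
      then have "(SOME x. x \<in> {0..1} \<and> g x = y) \<in> {0..1} \<and> g (SOME x. x \<in> {0..1} \<and> g x = y) = y"
        by (rule someI_ex)
      then show ?thesis using True by simp
    next
      case False then show ?thesis using out by auto
    qed
  qed
qed

lemma TF_P:
  assumes "g \<in> ThompsonF"
  obtains P where "finite P" "P \<subseteq> {0..1}" "0 \<in> P" "1 \<in> P" "\<forall>p\<in>P. dyadic p"
    "\<And>a b. a\<in>P \<Longrightarrow> b\<in>P \<Longrightarrow> a < b \<Longrightarrow> {a<..<b} \<inter> P = {} \<Longrightarrow>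
        (\<exists>(k::int) (c::real). \<forall>x\<in>{a..b}. g x = 2 powr (real_of_int k) * x + c)"
proof -
  have "\<exists>P. finite P \<and> P \<subseteq> {0..1} \<and> 0 \<in> P \<and> 1 \<in> P \<and> (\<forall>p\<in>P. dyadic p) \<and>
        (\<forall>a\<in>P. \<forall>b\<in>P. a < b \<and> {a<..<b} \<inter> P = {} \<longrightarrow>
            (\<exists>(k::int) (c::real). \<forall>x\<in>{a..b}. g x = 2 powr (real_of_int k) * x + c))"
    using assms unfolding ThompsonF_def by simp
  then obtain P where P: "finite P" "P \<subseteq> {0..1}" "0 \<in> P" "1 \<in> P" "\<forall>p\<in>P. dyadic p"
     "\<forall>a\<in>P. \<forall>b\<in>P. a < b \<and> {a<..<b} \<inter> P = {} \<longrightarrow>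
            (\<exists>(k::int) (c::real). \<forall>x\<in>{a..b}. g x = 2 powr (real_of_int k) * x + c)"
    by (elim exE conjE) 
  show ?thesis
    by (rule that[OF P(1-5)]) (use P(6) in blast)
qed

lemma TF_left:
  assumes "g \<in> ThompsonF"
  shows "\<exists>d>0. \<exists>p::int. \<forall>u\<in>{0..d}. g u = 2 powr p * u"
proof -
  obtain P where P: "finite P" "P \<subseteq> {0..1}" "0 \<in> P" "1 \<in> P" "\<forall>p\<in>P. dyadic p"
    "\<And>a b. a\<in>P \<Longrightarrow> b\<in>P \<Longrightarrow> a < b \<Longrightarrow> {a<..<b} \<inter> P = {} \<Longrightarrow>
        (\<exists>(k::int) (c::real). \<forall>x\<in>{a..b}. g x = 2 powr (real_of_int k) * x + c)"
    using TF_P[OF assms] by blast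
  have g0: "g 0 = 0" using TF_props[OF assms] by auto
  define p1 where "p1 = Min (P - {0})"
  have ne: "P - {0} \<noteq> {}" using P by auto
  have p1in: "p1 \<in> P - {0}" unfolding p1_def using ne P(1) by (intro Min_in) auto
  have p1pos: "0 < p1" using p1in P(2) by fastforce
  have "{0<..<p1} \<inter> P = {}"
  proof -
    { fix q assume q: "q \<in> P" "0 < q" "q < p1"
      then have "p1 \<le> q" unfolding p1_def using P(1) by (intro Min_le) auto
      then have False using q by simp }
    then show ?thesis by auto
  qed
  moreover have p1P: "p1 \<in> P" using p1in by simp
  ultimately obtain k c where kc: "\<forall>x\<in>{0..p1}. g x = 2 powr (real_of_int k) * x + c"
    using P(6)[OF P(3) p1P p1pos] by blast
  have "g 0 = 2 powr (real_of_int k) * 0 + c" using kc p1pos by simp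
  then have "c = 0" using g0 by simp
  show ?thesis
    by (rule exI[of _ p1], intro conjI p1pos exI[of _ k] ballI) (use kc \<open>c = 0\<close> in simp)
qed

lemma TF_right:
  assumes "g \<in> ThompsonF"
  shows "\<exists>d>0. \<exists>q::int. \<forall>v\<in>{0..d}. g (1 - v) = 1 - 2 powr q * v"
proof -
  obtain P where P: "finite P" "P \<subseteq> {0..1}" "0 \<in> P" "1 \<in> P" "\<forall>p\<in>P. dyadic p"
    "\<And>a b. a\<in>P \<Longrightarrow> b\<in>P \<Longrightarrow> a < b \<Longrightarrow> {a<..<b} \<inter> P = {} \<Longrightarrow>
        (\<exists>(k::int) (c::real). \<forall>x\<in>{a..b}. g x = 2 powr (real_of_int k) * x + c)"
    using TF_P[OF assms] by blast
  have g1: "g 1 = 1" using TF_props[OF assms] by auto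
  define p2 where "p2 = Max (P - {1})"
  have ne: "P - {1} \<noteq> {}" using P by auto
  have p2in: "p2 \<in> P - {1}" unfolding p2_def using ne P(1) by (intro Max_in) auto
  have p2lt: "p2 < 1" using p2in P(2) by fastforce
  have "{p2<..<1} \<inter> P = {}"
  proof -
    { fix q assume q: "q \<in> P" "p2 < q" "q < 1"
      then have "q \<le> p2" unfolding p2_def using P(1) by (intro Max_ge) auto
      then have False using q by simp }
    then show ?thesis by auto
  qed
  moreover have p2P: "p2 \<in> P" using p2in by simp
  ultimately obtain k c where kc: "\<forall>x\<in>{p2..1}. g x = 2 powr (real_of_int k) * x + c"
    using P(6)[OF p2P P(4) p2lt] by blast
  have "g 1 = 2 powr (real_of_int k) * 1 + c" using kc p2lt by simp
  then have c: "c = 1 - 2 powr (real_of_int k)" using g1 by simp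
  show ?thesis
  proof (intro exI[of _ "1 - p2"] conjI exI[of _ k] ballI)
    fix v assume v: "v \<in> {0..1 - p2}"
    then have "1 - v \<in> {p2..1}" by auto
    then have "g (1 - v) = 2 powr (real_of_int k) * (1 - v) + c" using kc by blast
    then show "g (1 - v) = 1 - 2 powr (real_of_int k) * v" using c by (simp add: algebra_simps)
  qed (use p2lt in auto)
qed


definition zz :: "real \<Rightarrow> real" where "zz = x1 \<circ> x0"

lemma z_lo: "0 \<le> t \<Longrightarrow> t \<le> 3/8 \<Longrightarrow> zz t = 2 * t"
  unfolding zz_def x0_def x1_def by auto

lemma z_mid: "3/8 \<le> t \<Longrightarrow> t \<le> 1/2 \<Longrightarrow> zz t = t + 3/8"
  unfolding zz_def x0_def x1_def by auto

lemma z_hi: "1/2 \<le> t \<Longrightarrow> t \<le> 1 \<Longrightarrow> zz t = 1 - (1 - t) / 4"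
  unfolding zz_def x0_def x1_def by (auto simp: field_simps)

lemma zpow_lo: "0 \<le> t \<Longrightarrow> 2^n * t \<le> 3/4 \<Longrightarrow> (zz ^^ n) t = 2^n * t"
proof (induction n)
  case 0 then show ?case by simp
next
  case (Suc n)
  have h: "2^n * t \<le> 3/8" using Suc.prems by simp
  then have "(zz ^^ n) t = 2^n * t" using Suc by simp
  then show ?case using z_lo[of "2^n * t"] h Suc.prems by simp
qed

lemma zpow_hi: "1/2 \<le> t \<Longrightarrow> t \<le> 1 \<Longrightarrow> (zz ^^ n) t = 1 - (1 - t) / 4^n"
proof (induction n)
  case 0 then show ?case by simp
next
  case (Suc n)
  then have e: "(zz ^^ n) t = 1 - (1 - t) / 4^n" by simp
  have a: "0 \<le> (1 - t) / 4^n" using Suc.prems by simp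
  have "(1 - t) / 4^n \<le> (1 - t) / 1" using Suc.prems by (intro divide_left_mono) auto
  then have "(1 - t) / 4^n \<le> 1 - t" by simp
  then have b: "(1 - t) / 4^n \<le> 1/2" using Suc.prems by linarith
  have "zz (1 - (1 - t) / 4^n) = 1 - (1 - (1 - (1 - t) / 4^n)) / 4" using a b by (intro z_hi) auto
  then have "zz (1 - (1 - t) / 4^n) = 1 - ((1 - t) / 4^n) / 4" by simp
  then show ?case using e by simp
qed

lemma xi_lo: "0 \<le> t \<Longrightarrow> t \<le> 1/2 \<Longrightarrow> x0i t = t / 2"
  unfolding x0i_def by auto

lemma xipow_lo: "0 \<le> t \<Longrightarrow> t \<le> 1/2 \<Longrightarrow> (x0i ^^ n) t = t / 2^n"
proof (induction n)
  case 0 then show ?case by simp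
next
  case (Suc n)
  then have e: "(x0i ^^ n) t = t / 2^n" by simp
  have "t / 2^n \<le> t / 1" using Suc.prems by (intro divide_left_mono) auto
  then have "t / 2^n \<le> t" by simp
  then have "t / 2^n \<le> 1/2" using Suc.prems by linarith
  then show ?case using e xi_lo[of "t / 2^n"] Suc.prems by simp
qed

lemma xipow_hi: "0 \<le> w \<Longrightarrow> 2^n * w \<le> 1/2 \<Longrightarrow> (x0i ^^ n) (1 - w) = 1 - 2^n * w"
proof (induction n)
  case 0 then show ?case by simp
next
  case (Suc n)
  have h: "2^n * w \<le> 1/4" using Suc.prems by simp
  then have e: "(x0i ^^ n) (1 - w) = 1 - 2^n * w" using Suc by simp
  have "0 \<le> 2^n * w" using Suc.prems by simp
  then have "x0i (1 - 2^n * w) = 1 - 2^(Suc n) * w" using h unfolding x0i_def by (auto simp: field_simps)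
  then show ?case using e by simp
qed


lemma y_eq: "fconj (fmul x0 x1) g = g \<circ> zz \<circ> inv g"
  unfolding fconj_def fmul_def zz_def by (simp add: fun_eq_iff)

lemma ypow: "bij g \<Longrightarrow> ((g \<circ> zz \<circ> inv g) ^^ n) t = g ((zz ^^ n) (inv g t))"
proof (induction n)
  case 0 then show ?case by (simp add: bij_is_surj surj_f_inv_f)
next
  case (Suc n) then show ?case by (simp add: bij_is_inj inv_f_f)
qed

lemma pow_big: "0 < (d::real) \<Longrightarrow> \<exists>n::nat. 1 \<le> 2^n * d"
proof -
  assume d: "0 < d"
  obtain n :: nat where "1 / d < 2^n" using real_arch_pow[of 2 "1/d"] by auto
  then have "1 < 2^n * d" using d by (simp add: divide_less_eq)
  then show ?thesis by (intro exI[of _ n]) simp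
qed

lemma powr_nat_eq: "real n = r \<Longrightarrow> (2::real) ^ n = 2 powr r"
  by (metis powr_realpow zero_less_numeral)

lemma key:
  assumes gF: "g \<in> ThompsonF"
  shows "Rel (gen_subgroup {x0, fconj (fmul x0 x1) g}) 2 3 1 2 \<and>
         Rel (gen_subgroup {x0, fconj (fmul x0 x1) g}) 3 3 1 2"
proof -
  define H where "H = gen_subgroup {x0, fconj (fmul x0 x1) g}"
  define y where "y = g \<circ> zz \<circ> inv g"
  have bg: "bij g" by (rule TF_bij[OF gF])
  have yH: "y \<in> H" unfolding H_def y_def y_eq[symmetric] by (rule gen_base) simp
  have xiH: "x0i \<in> H" unfolding H_def using gen_inv[of x0 "{x0, fconj (fmul x0 x1) g}"] inv_x0 by simp
  have yp: "\<And>n t. (y ^^ n) t = g ((zz ^^ n) (inv g t))" unfolding y_def using ypow[OF bg] by blast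
  have ig: "\<And>u. inv g (g u) = u" using bg by (simp add: bij_is_inj inv_f_f)
  obtain d p where d: "d > 0" "\<And>u. u \<in> {0..d} \<Longrightarrow> g u = 2 powr (real_of_int p) * u"
    using TF_left[OF gF] by blast
  obtain d' q where d': "d' > 0" "\<And>v. v \<in> {0..d'} \<Longrightarrow> g (1 - v) = 1 - 2 powr (real_of_int q) * v"
    using TF_right[OF gF] by blast
  obtain n1 :: nat where n1: "1 \<le> 2^n1 * d" using pow_big[OF d(1)] by blast
  obtain m1 :: nat where m1: "1 \<le> 2^m1 * d'" using pow_big[OF d'(1)] by blast
  define N1 where "N1 = max n1 (nat p)"
  have N1a: "p \<le> int N1" unfolding N1_def by simp
  have "(2::real)^n1 \<le> 2^N1" unfolding N1_def by (intro power_increasing) auto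
  then have N1b: "1 \<le> 2^N1 * d" using n1 d(1) by (smt (verit) mult_right_mono)
  define M' where "M' = max m1 (nat (q + 2))"
  have "(2::real)^m1 \<le> 2^(2*M')" unfolding M'_def by (intro power_increasing) auto
  then have Ma: "1 \<le> 4^M' * d'" using m1 d'(1) by (simp add: power_mult) (smt (verit) mult_right_mono)
  have Mb: "q + 2 \<le> 2 * int M'" unfolding M'_def by simp
  define K where "K = nat (int N1 - p)"
  have K: "2 powr (real_of_int p) * 2^K = 2^N1"
  proof -
    have "(2::real)^K = 2 powr (real_of_int (int N1 - p))" by (rule powr_nat_eq) (use N1a in \<open>simp add: K_def\<close>)
    moreover have "(2::real)^N1 = 2 powr (real_of_int (int N1))" by (rule powr_nat_eq) simp
    ultimately show ?thesis by (simp add: powr_add[symmetric])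
  qed
  define M where "M = nat (2 * int M' - 1 - q)"
  have M: "2^M * 2 powr (real_of_int q) * 2 = (4::real)^M'"
  proof -
    have "(2::real)^M = 2 powr (real_of_int (2 * int M' - 1 - q))" by (rule powr_nat_eq) (use Mb in \<open>simp add: M_def\<close>)
    moreover have "(4::real)^M' = 2 powr (real_of_int (2 * int M'))"
      by (subst powr_nat_eq[symmetric, of "2 * M'"]) (simp_all add: power_mult)
    moreover have "(2::real) powr (real_of_int (2 * int M' - 1 - q)) * 2 powr (real_of_int q) * 2 powr 1
        = 2 powr (real_of_int (2 * int M' - 1 - q) + real_of_int q + 1)" by (simp only: powr_add)
    moreover have "real_of_int (2 * int M' - 1 - q) + real_of_int q + 1 = real_of_int (2 * int M')" by simp
    ultimately show ?thesis by simp
  qed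
  define M2 where "M2 = nat (2 * int M' - q)"
  have M2: "2^M2 * 2 powr (real_of_int q) = (4::real)^M'"
  proof -
    have "(2::real)^M2 = 2 powr (real_of_int (2 * int M' - q))" by (rule powr_nat_eq) (use Mb in \<open>simp add: M2_def\<close>)
    moreover have "(4::real)^M' = 2 powr (real_of_int (2 * int M'))"
      by (subst powr_nat_eq[symmetric, of "2 * M'"]) (simp_all add: power_mult)
    ultimately show ?thesis by (simp add: powr_add[symmetric])
  qed
  define Y where "Y = y ^^ (M' + Suc N1)"
  have common: "\<And>x. 0 \<le> x \<Longrightarrow> x \<le> 1/2 \<Longrightarrow> Y ((x0i ^^ K) x) = g ((zz ^^ M') (zz x))"
  proof -
    fix x :: real assume x: "0 \<le> x" "x \<le> 1/2"
    define u where "u = x / 2^N1"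
    have e1: "(x0i ^^ K) x = x / 2^K" using xipow_lo x by simp
    have "u \<le> 1 / 2^N1" unfolding u_def using x by (simp add: divide_right_mono)
    also have "\<dots> \<le> d" using N1b by (simp add: divide_le_eq mult.commute)
    finally have ud: "u \<in> {0..d}" using x unfolding u_def by simp
    have "g u = 2 powr (real_of_int p) * u" using d(2)[OF ud] .
    also have "\<dots> = x / 2^K" unfolding u_def using K
      by (simp add: field_simps)
    finally have e2: "inv g (x / 2^K) = u" using ig by metis
    have e3: "(zz ^^ N1) u = x" using zpow_lo[of u N1] x unfolding u_def by simp
    have "(zz ^^ (M' + Suc N1)) u = (zz ^^ M') (zz ((zz ^^ N1) u))" by (simp only: funpow_add funpow.simps(2) comp_apply)
    then show "Y ((x0i ^^ K) x) = g ((zz ^^ M') (zz x))" unfolding Y_def yp e1 e2 e3 by simp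
  qed
  have h1: "Rel H 2 3 1 2"
    unfolding Rel_def
  proof (intro bexI[of _ "x0i \<circ> x0i \<circ> (x0i ^^ M) \<circ> Y \<circ> (x0i ^^ K)"] ballI)
    fix x assume "x \<in> dI 2 3"
    then have x: "1/4 \<le> x" "x \<le> 3/8" unfolding dI_iff by auto
    define v where "v = (1 - 2 * x) / 4^M'"
    have a1: "Y ((x0i ^^ K) x) = g ((zz ^^ M') (zz x))" using common x by simp
    have a2: "zz x = 2 * x" using z_lo x by simp
    have a3: "(zz ^^ M') (2 * x) = 1 - v" using zpow_hi[of "2*x" M'] x unfolding v_def by simp
    have "v \<le> 1 / 4^M'" unfolding v_def using x by (simp add: divide_right_mono)
    also have "\<dots> \<le> d'" using Ma by (simp add: divide_le_eq mult.commute)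
    finally have vd: "v \<in> {0..d'}" using x unfolding v_def by simp
    have a4: "g (1 - v) = 1 - 2 powr (real_of_int q) * v" using d'(2)[OF vd] .
    have vv: "2^M * (2 powr (real_of_int q) * v) = (1 - 2 * x) / 2"
    proof -
      have "2^M * (2 powr (real_of_int q) * v) = (2^M * 2 powr (real_of_int q) * 2) * (1 - 2*x) / (2 * 4^M')"
        unfolding v_def by (simp add: field_simps)
      then show ?thesis using M by simp
    qed
    have a5: "(x0i ^^ M) (1 - 2 powr (real_of_int q) * v) = 1/2 + x"
      using xipow_hi[of "2 powr (real_of_int q) * v" M] vv vd x by (simp add: field_simps)
    have a6: "x0i (1/2 + x) = 2 * x" using x unfolding x0i_def by auto
    have a7: "x0i (2 * x) = 2 * x - 1/4" using x unfolding x0i_def by auto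
    show "(x0i \<circ> x0i \<circ> (x0i ^^ M) \<circ> Y \<circ> (x0i ^^ K)) x = (of_int 1 + (x * 2 ^ 3 - of_int 2)) / 2 ^ 2"
      using a1 a2 a3 a4 a5 a6 a7 by simp
  next
    show "x0i \<circ> x0i \<circ> (x0i ^^ M) \<circ> Y \<circ> (x0i ^^ K) \<in> H"
      unfolding Y_def using xiH yH by (simp add: gen_comp gen_pow H_def)
  qed
  have h2: "Rel H 3 3 1 2"
    unfolding Rel_def
  proof (intro bexI[of _ "x0i \<circ> x0i \<circ> (x0i ^^ M2) \<circ> Y \<circ> (x0i ^^ K)"] ballI)
    fix x assume "x \<in> dI 3 3"
    then have x: "3/8 \<le> x" "x \<le> 1/2" unfolding dI_iff by auto
    define v where "v = (5/8 - x) / 4^M'"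
    have a1: "Y ((x0i ^^ K) x) = g ((zz ^^ M') (zz x))" using common x by simp
    have a2: "zz x = x + 3/8" using z_mid x by simp
    have a3: "(zz ^^ M') (x + 3/8) = 1 - v" using zpow_hi[of "x + 3/8" M'] x unfolding v_def by simp
    have "v \<le> 1 / 4^M'" unfolding v_def using x by (simp add: divide_right_mono)
    also have "\<dots> \<le> d'" using Ma by (simp add: divide_le_eq mult.commute)
    finally have vd: "v \<in> {0..d'}" using x unfolding v_def by simp
    have a4: "g (1 - v) = 1 - 2 powr (real_of_int q) * v" using d'(2)[OF vd] .
    have vv: "2^M2 * (2 powr (real_of_int q) * v) = 5/8 - x"
    proof -
      have "2^M2 * (2 powr (real_of_int q) * v) = (2^M2 * 2 powr (real_of_int q)) * (5/8 - x) / 4^M'"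
        unfolding v_def by (simp add: field_simps)
      then show ?thesis using M2 by simp
    qed
    have a5: "(x0i ^^ M2) (1 - 2 powr (real_of_int q) * v) = x + 3/8"
      using xipow_hi[of "2 powr (real_of_int q) * v" M2] vv vd x by simp
    have a6: "x0i (x + 3/8) = 2 * x - 1/4" using x unfolding x0i_def by auto
    have a7: "x0i (2 * x - 1/4) = 2 * x - 1/2" using x unfolding x0i_def by auto
    show "(x0i \<circ> x0i \<circ> (x0i ^^ M2) \<circ> Y \<circ> (x0i ^^ K)) x = (of_int 1 + (x * 2 ^ 3 - of_int 3)) / 2 ^ 2"
      using a1 a2 a3 a4 a5 a6 a7 by simp
  next
    show "x0i \<circ> x0i \<circ> (x0i ^^ M2) \<circ> Y \<circ> (x0i ^^ K) \<in> H"
      unfolding Y_def using xiH yH by (simp add: gen_comp gen_pow H_def)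
  qed
  show ?thesis using h1 h2 unfolding H_def by simp
qed


lemma dyadic_diff: "dyadic x \<Longrightarrow> dyadic y \<Longrightarrow> dyadic (x - y)"
proof -
  assume "dyadic x" "dyadic y"
  then obtain m n m' n' where x: "x = real_of_int m / 2^n" and y: "y = real_of_int m' / 2^n'"
    unfolding dyadic_def by blast
  have "x - y = real_of_int (m * 2^n' - m' * 2^n) / 2^(n + n')"
    unfolding x y by (simp add: field_simps power_add)
  then show ?thesis unfolding dyadic_def by blast
qed

lemma dyadic_add: "dyadic x \<Longrightarrow> dyadic y \<Longrightarrow> dyadic (x + y)"
proof -
  assume "dyadic x" "dyadic y"
  then obtain m n m' n' where x: "x = real_of_int m / 2^n" and y: "y = real_of_int m' / 2^n'"
    unfolding dyadic_def by blast
  have "x + y = real_of_int (m * 2^n' + m' * 2^n) / 2^(n + n')"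
    unfolding x y by (simp add: field_simps power_add)
  then show ?thesis unfolding dyadic_def by blast
qed

lemma dyadic_scale: "dyadic x \<Longrightarrow> dyadic (2 powr (real_of_int k) * x)"
proof -
  assume "dyadic x"
  then obtain m n where x: "x = real_of_int m / 2^n" unfolding dyadic_def by blast
  show ?thesis
  proof (cases "0 \<le> k")
    case True
    have "(2::real)^(nat k) = 2 powr (real_of_int k)" by (rule powr_nat_eq) (use True in simp)
    then have "2 powr (real_of_int k) * x = real_of_int (m * 2^nat k) / 2^n" unfolding x by simp
    then show ?thesis unfolding dyadic_def by blast
  next
    case False
    have "(2::real)^(nat (-k)) = 2 powr (real_of_int (-k))" by (rule powr_nat_eq) (use False in simp)
    then have "2 powr (real_of_int k) = 1 / 2^(nat (-k))" by (simp add: powr_minus divide_inverse)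
    then have "2 powr (real_of_int k) * x = real_of_int m / 2^(n + nat (-k))" unfolding x by (simp add: power_add)
    then show ?thesis unfolding dyadic_def by blast
  qed
qed

lemma TF_zero_iff:
  assumes "f \<in> ThompsonF" "x \<in> {0..1}" shows "f x = 0 \<longleftrightarrow> x = 0"
proof
  assume fx: "f x = 0"
  show "x = 0"
  proof (rule ccontr)
    assume "x \<noteq> 0" then have "0 < x" using assms by auto
    then have "f 0 < f x" using strict_mono_onD[OF TF_props(3)[OF assms(1)]] assms by auto
    then show False using fx TF_props(4)[OF assms(1)] by simp
  qed
qed (use TF_props(4)[OF assms(1)] in simp)

lemma TF_one_iff:
  assumes "f \<in> ThompsonF" "x \<in> {0..1}" shows "f x = 1 \<longleftrightarrow> x = 1"
proof
  assume fx: "f x = 1"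
  show "x = 1"
  proof (rule ccontr)
    assume "x \<noteq> 1" then have "x < 1" using assms by auto
    then have "f x < f 1" using strict_mono_onD[OF TF_props(3)[OF assms(1)]] assms by auto
    then show False using fx TF_props(5)[OF assms(1)] by simp
  qed
qed (use TF_props(5)[OF assms(1)] in simp)

lemma TF_dyadic_vals:
  assumes fF: "f \<in> ThompsonF" and P: "finite P" "P \<subseteq> {0..1}" "0 \<in> P"
    "\<And>a b. a\<in>P \<Longrightarrow> b\<in>P \<Longrightarrow> a < b \<Longrightarrow> {a<..<b} \<inter> P = {} \<Longrightarrow>
        (\<exists>(k::int) (c::real). \<forall>x\<in>{a..b}. f x = 2 powr (real_of_int k) * x + c)"
    "\<forall>p\<in>P. dyadic p"
  shows "\<forall>a\<in>P. dyadic (f a)"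
proof -
  have "\<forall>a. a \<in> P \<longrightarrow> card {q\<in>P. q < a} = n \<longrightarrow> dyadic (f a)" for n
  proof (induction n rule: less_induct)
    case (less n)
    show ?case
    proof (intro allI impI)
      fix a assume a: "a \<in> P" and cn: "card {q\<in>P. q < a} = n"
      show "dyadic (f a)"
      proof (cases "a = 0")
        case True
        then have "f a = real_of_int 0 / 2^0" using TF_props(4)[OF fF] by simp
        then show ?thesis unfolding dyadic_def by blast
      next
        case False
        then have apos: "0 < a" using a P(2) by force
        define L where "L = {q\<in>P. q < a}"
        have Lfin: "finite L" unfolding L_def using P(1) by simp
        have L0: "0 \<in> L" unfolding L_def using P(3) apos by simp
        define p where "p = Max L"
        have pL: "p \<in> L" unfolding p_def using Lfin L0 by (intro Max_in) auto
        then have pP: "p \<in> P" and pa: "p < a" unfolding L_def by auto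
        have gap: "{p<..<a} \<inter> P = {}"
        proof -
          { fix q assume q: "q \<in> P" "p < q" "q < a"
            then have "q \<in> L" unfolding L_def by simp
            then have "q \<le> p" unfolding p_def using Lfin by (intro Max_ge) auto
            then have False using q by simp }
          then show ?thesis by auto
        qed
        obtain k c where kc: "\<forall>x\<in>{p..a}. f x = 2 powr (real_of_int k) * x + c"
          using P(4)[OF pP a pa gap] by blast
        have sub: "{q\<in>P. q < p} \<subset> L" unfolding L_def using pP pa by auto
        have "card {q\<in>P. q < p} < card L" by (rule psubset_card_mono[OF Lfin sub])
        then have dfp: "dyadic (f p)" using less.IH cn pP unfolding L_def by blast
        have "f p = 2 powr (real_of_int k) * p + c" using kc pa by simp
        moreover have "f a = 2 powr (real_of_int k) * a + c" using kc pa by simp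
        ultimately have "f a = 2 powr (real_of_int k) * (a - p) + f p" by (simp add: algebra_simps)
        moreover have "dyadic a" "dyadic p" using a pP P(5) by auto
        ultimately show ?thesis using dfp dyadic_add dyadic_scale dyadic_diff by metis
      qed
    qed
  qed
  then show ?thesis by blast
qed


lemma pair_data:
  assumes "\<forall>x\<in>{a..b}. f x = 2 powr (real_of_int k) * x + c" "a \<le> b" "dyadic (f a)" "dyadic a"
  shows "\<exists>n0::nat. \<forall>N\<ge>n0. k \<le> int N \<and> (\<exists>m::int. c * 2^(nat (int N - k)) = of_int m)"
proof -
  have "f a = 2 powr (real_of_int k) * a + c" using assms(1,2) by simp
  then have "c = f a - 2 powr (real_of_int k) * a" by simp
  then have "dyadic c" using assms(3,4) dyadic_diff dyadic_scale by simp
  then obtain m e where c: "c = real_of_int m / 2^e" unfolding dyadic_def by blast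
  show ?thesis
  proof (intro exI[of _ "nat k + e"] allI impI conjI)
    fix N :: nat assume N: "nat k + e \<le> N"
    then show "k \<le> int N" by linarith
    define N' where "N' = nat (int N - k)"
    have "e \<le> N'" unfolding N'_def using N by linarith
    then have "(2::real)^N' = 2^e * 2^(N' - e)" by (simp add: power_add[symmetric])
    then have "c * 2^N' = real_of_int (m * 2^(N' - e))" unfolding c by simp
    then show "\<exists>m::int. c * 2^(nat (int N - k)) = of_int m" unfolding N'_def by blast
  qed
qed

context relH
begin

lemma cover:
  assumes fF: "f \<in> ThompsonF"
  shows "f \<in> closureF H"
proof -
  obtain Pf where Pf: "finite Pf" "Pf \<subseteq> {0..1}" "0 \<in> Pf" "1 \<in> Pf" "\<forall>p\<in>Pf. dyadic p"
    "\<And>a b. a\<in>Pf \<Longrightarrow> b\<in>Pf \<Longrightarrow> a < b \<Longrightarrow> {a<..<b} \<inter> Pf = {} \<Longrightarrow>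
        (\<exists>(k::int) (c::real). \<forall>x\<in>{a..b}. f x = 2 powr (real_of_int k) * x + c)"
    using TF_P[OF fF] by blast
  have fdy: "\<forall>a\<in>Pf. dyadic (f a)" by (rule TF_dyadic_vals[OF fF Pf(1-3) Pf(6) Pf(5)])
  define CP where "CP = {(a, b). a \<in> Pf \<and> b \<in> Pf \<and> a < b \<and> {a<..<b} \<inter> Pf = {}}"
  have CPfin: "finite CP"
  proof -
    have "CP \<subseteq> Pf \<times> Pf" unfolding CP_def by auto
    then show ?thesis using Pf(1) finite_subset by blast
  qed
  define Q where "Q = (\<lambda>(ab::real\<times>real). \<lambda>(t::int \<times> real \<times> nat).
      (\<forall>x\<in>{fst ab..snd ab}. f x = 2 powr (real_of_int (fst t)) * x + fst (snd t))
      \<and> (\<forall>N\<ge>snd (snd t). fst t \<le> int N \<and> (\<exists>m::int. fst (snd t) * 2^(nat (int N - fst t)) = of_int m)))"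
  have exQ: "\<exists>t. Q ab t" if ab: "ab \<in> CP" for ab
  proof -
    obtain a b where abd: "ab = (a, b)" by fastforce
    have a: "a \<in> Pf" "b \<in> Pf" "a < b" "{a<..<b} \<inter> Pf = {}" using ab unfolding CP_def abd by auto
    obtain k c where kc: "\<forall>x\<in>{a..b}. f x = 2 powr (real_of_int k) * x + c" using Pf(6)[OF a] by blast
    have "\<exists>n0::nat. \<forall>N\<ge>n0. k \<le> int N \<and> (\<exists>m::int. c * 2^(nat (int N - k)) = of_int m)"
      by (rule pair_data[OF kc]) (use a fdy Pf(5) in auto)
    then obtain n0 where n0: "\<forall>N\<ge>n0. k \<le> int N \<and> (\<exists>m::int. c * 2^(nat (int N - k)) = of_int m)"
      by (elim exE)
    have "Q ab (k, c, n0)" unfolding Q_def abd fst_conv snd_conv using kc n0 by (intro conjI)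
    then show ?thesis by blast
  qed
  define T where "T = (\<lambda>ab. SOME t. Q ab t)"
  have TQ: "Q ab (T ab)" if "ab \<in> CP" for ab
    unfolding T_def by (rule someI_ex[OF exQ[OF that]])
  have T: "(\<forall>x\<in>{fst ab..snd ab}. f x = 2 powr (real_of_int (fst (T ab))) * x + fst (snd (T ab)))
      \<and> (\<forall>N\<ge>snd (snd (T ab)). fst (T ab) \<le> int N \<and> (\<exists>m::int. fst (snd (T ab)) * 2^(nat (int N - fst (T ab))) = of_int m))"
    if "ab \<in> CP" for ab
    using TQ[OF that] unfolding Q_def .
  have "\<forall>q\<in>Pf. \<exists>e::nat. \<exists>m::int. q = real_of_int m / 2^e" using Pf(5) unfolding dyadic_def by blast
  then have exE': "\<exists>e::nat. \<exists>m::int. q = real_of_int m / 2^e" if "q \<in> Pf" for q using that by blast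
  define Ee where "Ee = (\<lambda>q. SOME e::nat. \<exists>m::int. q = real_of_int m / 2^e)"
  have Ee: "\<exists>m::int. q = real_of_int m / 2^(Ee q)" if "q \<in> Pf" for q
    unfolding Ee_def by (rule someI_ex[OF exE'[OF that]])
  define N where "N = max 2 (max (Max ((\<lambda>ab. snd (snd (T ab))) ` CP)) (Max (Ee ` Pf)))"
  have N2: "2 \<le> N" unfolding N_def by simp
  have NT: "\<And>ab. ab \<in> CP \<Longrightarrow> snd (snd (T ab)) \<le> N"
  proof -
    fix ab assume "ab \<in> CP"
    then have "snd (snd (T ab)) \<le> Max ((\<lambda>ab. snd (snd (T ab))) ` CP)" using CPfin by (intro Max_ge) auto
    then show "snd (snd (T ab)) \<le> N" unfolding N_def by linarith
  qed
  have NE: "\<And>q. q \<in> Pf \<Longrightarrow> Ee q \<le> N"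
  proof -
    fix q assume "q \<in> Pf"
    then have "Ee q \<le> Max (Ee ` Pf)" using Pf(1) by (intro Max_ge) auto
    then show "Ee q \<le> N" unfolding N_def by linarith
  qed
  have grid: "\<And>q. q \<in> Pf \<Longrightarrow> \<exists>i::int. q = real_of_int i / 2^N"
  proof -
    fix q assume q: "q \<in> Pf"
    obtain m where m: "q = real_of_int m / 2^(Ee q)" using Ee[OF q] by blast
    have ee: "Ee q + (N - Ee q) = N" using NE[OF q] by simp
    have pe: "(2::real)^N = 2^(Ee q) * 2^(N - Ee q)" by (subst ee[symmetric], subst power_add) simp
    have "real_of_int (m * 2^(N - Ee q)) / 2^N = real_of_int m / 2^(Ee q)"
      unfolding pe by simp
    then have "q = real_of_int (m * 2^(N - Ee q)) / 2^N" using m by simp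
    then show "\<exists>i::int. q = real_of_int i / 2^N" by blast
  qed
  define P where "P = (\<lambda>j::int. real_of_int j / 2^N) ` {0..2^N}"
  have "finite P" unfolding P_def by simp
  moreover have "P \<subseteq> {0..1}" unfolding P_def by (auto simp: divide_le_eq)
  moreover have "0 \<in> P" unfolding P_def by (intro image_eqI[of _ _ 0]) auto
  moreover have "1 \<in> P" unfolding P_def by (intro image_eqI[of _ _ "2^N"]) auto
  moreover have "\<forall>a\<in>P. \<forall>b\<in>P. a < b \<and> {a<..<b} \<inter> P = {} \<longrightarrow> (\<exists>h\<in>H. \<forall>x\<in>{a..b}. f x = h x)"
  proof (intro ballI impI)
    fix a b assume aP: "a \<in> P" and bP: "b \<in> P" and ab: "a < b \<and> {a<..<b} \<inter> P = {}"
    obtain j where j: "0 \<le> j" "j \<le> 2^N" "a = real_of_int j / 2^N" using aP unfolding P_def by auto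
    obtain j2 where j2: "0 \<le> j2" "j2 \<le> 2^N" "b = real_of_int j2 / 2^N" using bP unfolding P_def by auto
    have "j < j2" using ab j j2 by (simp add: divide_less_cancel)
    have "\<not> j + 1 < j2"
    proof
      assume lt: "j + 1 < j2"
      have "real_of_int (j + 1) / 2^N \<in> P" unfolding P_def using j j2 lt by (intro imageI) auto
      moreover have "a < real_of_int (j + 1) / 2^N" "real_of_int (j + 1) / 2^N < b"
        using j j2 lt by (simp_all add: divide_less_cancel)
      ultimately show False using ab by auto
    qed
    then have j2e: "j2 = j + 1" using \<open>j < j2\<close> by simp
    have abI: "{a..b} = dI j N" unfolding dI_def j(3) j2(3) j2e by simp
    have a01: "a \<in> {0..1}" "b \<in> {0..1}" using aP bP \<open>P \<subseteq> {0..1}\<close> by auto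
    define Lo where "Lo = {q\<in>Pf. q \<le> a}"
    define Hi where "Hi = {q\<in>Pf. b \<le> q}"
    have Lofin: "finite Lo" "0 \<in> Lo" unfolding Lo_def using Pf a01 by auto
    have Hifin: "finite Hi" "1 \<in> Hi" unfolding Hi_def using Pf a01 by auto
    define p where "p = Max Lo"
    define p' where "p' = Min Hi"
    have pLo: "p \<in> Lo" unfolding p_def using Lofin by (intro Max_in) auto
    have pHi: "p' \<in> Hi" unfolding p'_def using Hifin by (intro Min_in) auto
    have pp: "p \<in> Pf" "p \<le> a" "p' \<in> Pf" "b \<le> p'" using pLo pHi unfolding Lo_def Hi_def by auto
    have nomid: "\<And>q. q \<in> Pf \<Longrightarrow> a < q \<Longrightarrow> q < b \<Longrightarrow> False"
    proof -
      fix q assume q: "q \<in> Pf" "a < q" "q < b"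
      obtain i where i: "q = real_of_int i / 2^N" using grid[OF q(1)] by blast
      have "j < i" "i < j + 1" using q(2,3) unfolding i j(3) j2(3) j2e by (simp_all add: divide_less_cancel)
      then show False by simp
    qed
    have gap: "{p<..<p'} \<inter> Pf = {}"
    proof -
      { fix q assume q: "q \<in> Pf" "p < q" "q < p'"
        have "\<not> q \<le> a"
        proof
          assume "q \<le> a" then have "q \<in> Lo" unfolding Lo_def using q by simp
          then have "q \<le> p" unfolding p_def using Lofin by (intro Max_ge) auto
          then show False using q by simp
        qed
        moreover have "\<not> b \<le> q"
        proof
          assume "b \<le> q" then have "q \<in> Hi" unfolding Hi_def using q by simp
          then have "p' \<le> q" unfolding p'_def using Hifin by (intro Min_le) auto
          then show False using q by simp
        qed
        ultimately have False using nomid[OF q(1)] by simp }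
      then show ?thesis by auto
    qed
    have pCP: "(p, p') \<in> CP" unfolding CP_def using pp gap ab by auto
    define k where "k = fst (T (p, p'))"
    define c where "c = fst (snd (T (p, p')))"
    have fk: "\<forall>x\<in>{p..p'}. f x = 2 powr (real_of_int k) * x + c" using T[OF pCP] unfolding k_def c_def by simp
    have "snd (snd (T (p, p'))) \<le> N" by (rule NT[OF pCP])
    then have kN: "k \<le> int N" and "\<exists>m::int. c * 2^(nat (int N - k)) = of_int m"
      using T[OF pCP] unfolding k_def c_def by auto
    then obtain m where m: "c * 2^(nat (int N - k)) = of_int m" by blast
    define N' where "N' = nat (int N - k)"
    define j' where "j' = j + m"
    have pw: "(2::real)^N = 2^N' * 2 powr (real_of_int k)"
    proof -
      have "(2::real)^N' = 2 powr (real_of_int (int N - k))" by (rule powr_nat_eq) (use kN in \<open>simp add: N'_def\<close>)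
      moreover have "(2::real)^N = 2 powr (real_of_int (int N))" by (rule powr_nat_eq) simp
      ultimately show ?thesis by (simp add: powr_add[symmetric])
    qed
    have form: "\<And>x. x \<in> {a..b} \<Longrightarrow> f x = (of_int j' + (x * 2^N - of_int j)) / 2^N'"
    proof -
      fix x assume x: "x \<in> {a..b}"
      then have "f x = 2 powr (real_of_int k) * x + c" using fk pp by auto
      moreover have "c = of_int m / 2^N'" using m unfolding N'_def by (simp add: field_simps)
      ultimately show "f x = (of_int j' + (x * 2^N - of_int j)) / 2^N'"
        unfolding j'_def pw by (simp add: field_simps)
    qed
    have fa: "f a = of_int j' / 2^N'" using form[of a] ab j(3) by simp
    have "b \<in> {a..b}" using ab by simp
    then have fb0: "f b = (of_int j' + (b * 2^N - of_int j)) / 2^N'" by (rule form)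
    have "b * 2^N = of_int j + 1" using j2(3) j2e by simp
    then have fb: "f b = (of_int j' + 1) / 2^N'" using fb0 by simp
    have "0 \<le> f a" using TF_range[OF fF a01(1)] by simp
    then have "0 \<le> real_of_int j' / 2^N'" using fa by simp
    moreover have "real_of_int j' = (real_of_int j' / 2^N') * 2^N'" by simp
    ultimately have "0 \<le> real_of_int j'" by (metis mult_nonneg_nonneg zero_le_numeral zero_le_power)
    then have c1: "0 \<le> j'" by simp
    have "f b \<le> 1" using TF_range[OF fF a01(2)] by simp
    then have "(of_int j' + 1) \<le> (2::real)^N'" using fb by (simp add: divide_le_eq)
    then have c2: "j' + 1 \<le> 2^N'"
      using of_int_le_iff[of "j'+1" "(2::int)^N'", where ?'a=real] by simp
    have c3: "j = 0 \<longleftrightarrow> j' = 0"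
    proof -
      have "j = 0 \<longleftrightarrow> a = 0" using j(3) by simp
      also have "\<dots> \<longleftrightarrow> f a = 0" using TF_zero_iff[OF fF a01(1)] by simp
      also have "\<dots> \<longleftrightarrow> j' = 0" using fa by simp
      finally show ?thesis .
    qed
    have c4: "j + 1 = 2^N \<longleftrightarrow> j' + 1 = 2^N'"
    proof -
      have "j + 1 = 2^N \<longleftrightarrow> b = 1"
      proof -
        have "b = 1 \<longleftrightarrow> real_of_int (j + 1) = 2^N" using j2(3) j2e by (auto simp: divide_eq_1_iff)
        also have "\<dots> \<longleftrightarrow> j + 1 = 2^N" using of_int_eq_iff[of "j+1" "(2::int)^N", where ?'a=real] by simp
        finally show ?thesis by simp
      qed
      also have "\<dots> \<longleftrightarrow> f b = 1" using TF_one_iff[OF fF a01(2)] by simp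
      also have "\<dots> \<longleftrightarrow> real_of_int (j' + 1) = 2^N'" using fb by (auto simp: divide_eq_1_iff)
      also have "\<dots> \<longleftrightarrow> j' + 1 = 2^N'" using of_int_eq_iff[of "j'+1" "(2::int)^N'", where ?'a=real] by simp
      finally show ?thesis .
    qed
    have "Rel H j N j' N'" by (rule all_rel) (use j j2 j2e c1 c2 c3 c4 N2 in auto)
    then obtain h where h: "h \<in> H" "\<And>x. x \<in> dI j N \<Longrightarrow> h x = (of_int j' + (x * 2^N - of_int j)) / 2^N'"
      unfolding Rel_def by blast
    show "\<exists>h\<in>H. \<forall>x\<in>{a..b}. f x = h x"
      using h form abI by (intro bexI[of _ h]) auto
  qed
  ultimately show ?thesis unfolding closureF_def using fF by blast
qed

end


theorem lemma3p2:
  assumes "g \<in> ThompsonF"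
  shows "closureF (gen_subgroup {x0, fconj (fmul x0 x1) g}) = ThompsonF"
proof -
  define H where "H = gen_subgroup {x0, fconj (fmul x0 x1) g}"
  have bg: "bij g" by (rule TF_bij[OF assms])
  have byy: "bij (fconj (fmul x0 x1) g)"
    unfolding y_eq zz_def using bg bij_x0 bij_x1 by (intro bij_comp bij_imp_bij_inv)
  have bS: "\<forall>s\<in>{x0, fconj (fmul x0 x1) g}. bij s" using bij_x0 byy by auto
  have kk: "Rel H 2 3 1 2" "Rel H 3 3 1 2" using key[OF assms] unfolding H_def by auto
  interpret relH H
  proof
    show "id \<in> H" unfolding H_def by (rule gen_subgroup.gen_id)
    show "\<And>a b. a \<in> H \<Longrightarrow> b \<in> H \<Longrightarrow> b \<circ> a \<in> H" unfolding H_def by (rule gen_comp)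
    show "\<And>h. h \<in> H \<Longrightarrow> inv h \<in> H \<and> bij h"
      unfolding H_def using gen_inv_closed gen_bij bS by blast
    show "x0 \<in> H" unfolding H_def by (rule gen_subgroup.gen_base) simp
    show "Rel H 2 3 1 2" "Rel H 3 3 1 2" by (rule kk(1), rule kk(2))
  qed
  have "closureF H = ThompsonF"
  proof
    show "closureF H \<subseteq> ThompsonF" unfolding closureF_def by auto
    show "ThompsonF \<subseteq> closureF H" using cover by auto
  qed
  then show ?thesis unfolding H_def .
qed


end
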